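(* Let $v_1,\dots,v_n$ be distinct real numbers, $s_1,\dots,s_n\in[0,1)$, and $\gamma\in[0,1]$. Then there exist $t\in\mathbb{R}$ and $\alpha\in[0,1]$ such that, for the sector $S=S_{\alpha,\alpha+\gamma}$ of aperture $\gamma$, $$\big|N_S(s_1+v_1t,\dots,s_n+v_nt)-\gamma n\big|\ \ge\ \sqrt{(\gamma-\gamma^2)n}.$$ In particular, there exists $t\in\mathbb{R}$ with $B(s_1+v_1t,\dots,s_n+v_nt)\ge\sqrt n/2$.
   Context: For $r\in\mathbb{R}$, $\{r\}:=r-\lfloor r\rfloor$. For $\alpha\in\mathbb{R}$, $\gamma\in[0,1]$, the sector $S_{\alpha,\alpha+\gamma}:=\{x\in[0,1]:\{x-\alpha\}\le\gamma\}$, of aperture $\gamma$. For a sector $S$ and $x_1,\dots,x_n\in\mathbb{R}$, $N_S(x_1,\dots,x_n):=|\{i:\{x_i\}\in S\}|$. For $r_1,\dots,r_n\in\mathbb{R}$, the bias is $B(r_1,\dots,r_n):=\sup_{0\le a\le b\le1}\big|\,|\{i:\{r_i\}\in[a,b]\}|-n(b-a)\big|$. *)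

theory Defs
  imports Complex_Main
begin

definition sector :: "real \<Rightarrow> real \<Rightarrow> real set" where
  "sector \<alpha> \<gamma> = {x \<in> {0..1}. frac (x - \<alpha>) \<le> \<gamma>}"

text \<open>N_S(x_1,...,x_n), points indexed by 0..n-1.\<close>
definition N_S :: "real set \<Rightarrow> nat \<Rightarrow> (nat \<Rightarrow> real) \<Rightarrow> nat" where
  "N_S S n x = card {i \<in> {..<n}. frac (x i) \<in> S}"

text \<open>Bias B(r_1,...,r_n), points indexed by 0..n-1.\<close>
definition bias :: "nat \<Rightarrow> (nat \<Rightarrow> real) \<Rightarrow> real" where
  "bias n r = (SUP ab \<in> {(a, b). 0 \<le> a \<and> a \<le> b \<and> b \<le> (1::real)}.
      \<bar>real (card {i \<in> {..<n}. frac (r i) \<in> {fst ab..snd ab}}) - real n * (snd ab - fst ab)\<bar>)"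

end

theory Submission
  imports Defs "HOL-Analysis.Analysis"
begin

lemma deriv_paste:
  fixes f :: "real \<Rightarrow> real"
  assumes "(f has_field_derivative D) (at x within {..x})"
    and "(f has_field_derivative D) (at x within {x..})"
  shows "(f has_field_derivative D) (at x)"
proof -
  have U: "UNIV = {..x} \<union> {x..}" by auto
  show ?thesis using assms unfolding has_field_derivative_iff
    by (subst U) (simp add: Lim_within_Un)
qed

definition phi :: "real \<Rightarrow> real" where "phi x = (max 0 x)^2 / 2"

lemma phi_deriv: "(phi has_field_derivative max 0 x) (at x)"
proof (cases "x = 0")
  case True
  have a: "(phi has_field_derivative 0) (at 0 within {..0})"
  proof -
    have "((\<lambda>y. 0::real) has_field_derivative 0) (at 0 within {..0})" by (rule derivative_intros)
    then show ?thesis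
      by (rule has_field_derivative_transform_within[where d=1]) (auto simp: phi_def max_def)
  qed
  have b: "(phi has_field_derivative 0) (at 0 within {0..})"
  proof -
    have "((\<lambda>y. y^2/2::real) has_field_derivative (2 * 0^1 * 1)/2) (at 0 within {0..})"
      by (intro derivative_eq_intros) auto
    then have "((\<lambda>y. y^2/2::real) has_field_derivative 0) (at 0 within {0..})" by simp
    then show ?thesis
      by (rule has_field_derivative_transform_within[where d=1]) (auto simp: phi_def max_def)
  qed
  show ?thesis using deriv_paste[OF a b] True by simp
next
  case False
  show ?thesis
  proof (cases "x > 0")
    case True
    have "((\<lambda>y. y^2/2::real) has_field_derivative (of_nat 2 * x^1 * 1)/2) (at x)"
      by (intro derivative_eq_intros) auto
    then have "((\<lambda>y. y^2/2::real) has_field_derivative x) (at x)" by simp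
    then have "(phi has_field_derivative x) (at x)"
      by (rule has_field_derivative_transform_within_open[where S="{0<..}"]) (use True in \<open>auto simp: phi_def\<close>)
    then show ?thesis using True by simp
  next
    case False
    with \<open>x \<noteq> 0\<close> have "x < 0" by simp
    have "((\<lambda>y. 0::real) has_field_derivative 0) (at x)" by (rule derivative_intros)
    then have "(phi has_field_derivative 0) (at x)"
      by (rule has_field_derivative_transform_within_open[where S="{..<0}"]) (use \<open>x < 0\<close> in \<open>auto simp: phi_def\<close>)
    then show ?thesis using \<open>x < 0\<close> by simp
  qed
qed


definition ov :: "real \<Rightarrow> real \<Rightarrow> real" where "ov g d = max 0 (g - d) + max 0 (d + g - 1)"
definition Phi :: "real \<Rightarrow> real \<Rightarrow> real" where "Phi g d = g^2/2 - phi (g - d) + phi (d + g - 1) - g^2 * d"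
definition Gf :: "real \<Rightarrow> real \<Rightarrow> real" where "Gf g y = Phi g (frac y)"
definition Ff :: "real \<Rightarrow> real \<Rightarrow> real" where "Ff g y = ov g (frac y) - g^2"

lemma Phi_deriv: "(Phi g has_field_derivative (ov g d - g^2)) (at d)"
proof -
  have "((\<lambda>d. g^2/2 - phi (g - d) + phi (d + g - 1) - g^2 * d) has_field_derivative
     (0 - max 0 (g - d) * (0 - 1) + max 0 (d + g - 1) * (1 + 0 - 0) - g^2 * 1)) (at d)"
  proof -
    have h1: "((\<lambda>z. phi (g - z)) has_field_derivative max 0 (g - d) * (0 - 1)) (at d)"
      by (intro DERIV_chain2[OF phi_deriv] derivative_eq_intros) auto
    have h2: "((\<lambda>z. phi (z + g - 1)) has_field_derivative max 0 (d + g - 1) * (1 + 0 - 0)) (at d)"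
      by (intro DERIV_chain2[OF phi_deriv] derivative_eq_intros) auto
    show ?thesis
      using DERIV_diff[OF DERIV_add[OF DERIV_diff[OF DERIV_const h1] h2] DERIV_cmult[OF DERIV_ident, of "g^2"]]
      by simp
  qed
  then show ?thesis unfolding Phi_def[abs_def] ov_def by (simp add: algebra_simps)
qed

lemma Phi_shift_deriv: "((\<lambda>z. Phi g (z - c)) has_field_derivative (ov g (y - c) - g^2)) (at y within S)"
proof -
  have "((\<lambda>z. Phi g (z - c)) has_field_derivative (ov g (y - c) - g^2) * (1 - 0)) (at y within S)"
    by (intro DERIV_chain2[OF Phi_deriv] derivative_eq_intros) auto
  then show ?thesis by simp
qed

lemma Phi_0: "0 \<le> g \<Longrightarrow> g \<le> 1 \<Longrightarrow> Phi g 0 = 0"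
  by (simp add: Phi_def phi_def max_def power2_eq_square)
lemma Phi_1: "0 \<le> g \<Longrightarrow> g \<le> 1 \<Longrightarrow> Phi g 1 = 0"
  by (simp add: Phi_def phi_def max_def power2_eq_square)

lemma Gf_deriv:
  assumes g: "0 \<le> g" "g \<le> 1"
  shows "(Gf g has_field_derivative Ff g y) (at y)"
proof (cases "y \<in> \<int>")
  case False
  define k where "k = real_of_int (floor y)"
  have k1: "k \<le> y" unfolding k_def by (rule of_int_floor_le)
  have k2: "y < k + 1" unfolding k_def by (rule real_of_int_floor_add_one_gt)
  have k3: "k \<noteq> y" using False unfolding k_def by (metis Ints_of_int)
  have yk: "k < y" "y < k + 1" using k1 k2 k3 by auto
  have fr: "frac z = z - k" if "z \<in> {k<..<k+1}" for z
  proof -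
    have "floor z = floor y"
      by (rule floor_unique) (use that in \<open>auto simp: k_def\<close>)
    then show ?thesis unfolding frac_def k_def by simp
  qed
  have fy: "frac y = y - k" using fr yk by auto
  have d: "((\<lambda>z. Phi g (z - k)) has_field_derivative (ov g (y - k) - g^2)) (at y)"
    by (rule Phi_shift_deriv)
  have "((Gf g) has_field_derivative (ov g (y - k) - g^2)) (at y)"
  proof (rule has_field_derivative_transform_within_open[OF d, of "{k<..<k+1}"])
    show "open {k<..<k+1}" by simp
    show "y \<in> {k<..<k+1}" using yk by simp
    fix z assume "z \<in> {k<..<k+1}"
    then show "Phi g (z - k) = Gf g z" unfolding Gf_def using fr by simp
  qed
  then show ?thesis unfolding Ff_def fy .
next
  case True
  then obtain m where ym: "y = real_of_int m" by (auto elim: Ints_cases)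
  have fy: "frac y = 0" using ym by simp
  have a: "(Gf g has_field_derivative Ff g y) (at y within {y..})"
  proof -
    have d: "((\<lambda>z. Phi g (z - y)) has_field_derivative (ov g (y - y) - g^2)) (at y within {y..})"
      by (rule Phi_shift_deriv)
    have "(Gf g has_field_derivative (ov g (y - y) - g^2)) (at y within {y..})"
    proof (rule has_field_derivative_transform_within[OF d, of 1])
      show "(0::real) < 1" by simp
      show "y \<in> {y..}" by simp
      fix z assume z: "z \<in> {y..}" "dist z y < 1"
      have "floor z = m"
        by (rule floor_unique) (use z ym in \<open>auto simp: dist_real_def\<close>)
      then have "frac z = z - y" unfolding frac_def ym by simp
      then show "Phi g (z - y) = Gf g z" unfolding Gf_def by simp
    qed
    then show ?thesis unfolding Ff_def fy by simp
  qed
  have b: "(Gf g has_field_derivative Ff g y) (at y within {..y})"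
  proof -
    have d: "((\<lambda>z. Phi g (z - (y - 1))) has_field_derivative (ov g (y - (y - 1)) - g^2)) (at y within {..y})"
      by (rule Phi_shift_deriv)
    have "(Gf g has_field_derivative (ov g (y - (y - 1)) - g^2)) (at y within {..y})"
    proof (rule has_field_derivative_transform_within[OF d, of 1])
      show "(0::real) < 1" by simp
      show "y \<in> {..y}" by simp
      fix z assume z: "z \<in> {..y}" "dist z y < 1"
      show "Phi g (z - (y - 1)) = Gf g z"
      proof (cases "z = y")
        case True
        then show ?thesis unfolding Gf_def True fy using Phi_0[OF g] Phi_1[OF g] by simp
      next
        case False
        have "floor z = m - 1"
          by (rule floor_unique) (use z ym False in \<open>auto simp: dist_real_def\<close>)
        then have "frac z = z - (y - 1)" unfolding frac_def ym by simp
        then show ?thesis unfolding Gf_def by simp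
      qed
    qed
    moreover have "ov g (y - (y - 1)) = ov g (frac y)" unfolding fy by (simp add: ov_def max_def)
    ultimately show ?thesis unfolding Ff_def by simp
  qed
  show ?thesis by (rule deriv_paste[OF b a])
qed

lemma sq_le1: "0 \<le> (x::real) \<Longrightarrow> x \<le> 1 \<Longrightarrow> x * x \<le> 1"
  using mult_mono[of x 1 x 1] by auto

lemma Gf_bound: assumes "0 \<le> g" "g \<le> 1" shows "\<bar>Gf g y\<bar> \<le> 3"
proof -
  define d where "d = frac y"
  have d: "0 \<le> d" "d < 1" unfolding d_def by (auto simp: frac_lt_1)
  have "phi (g - d) \<le> 1" "phi (d + g - 1) \<le> 1" "0 \<le> phi (g - d)" "0 \<le> phi (d + g - 1)"
    using assms d unfolding phi_def by (auto simp: max_def power2_eq_square intro: order.trans[OF sq_le1])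
  moreover have "0 \<le> g^2" "g^2 \<le> 1" "g^2 * d \<le> 1" "0 \<le> g^2 * d" using assms d
    by (auto simp: power2_eq_square mult_le_one)
  ultimately show ?thesis unfolding Gf_def Phi_def d_def[symmetric] abs_le_iff by linarith
qed


lemma Ff_0: "0 \<le> g \<Longrightarrow> g \<le> 1 \<Longrightarrow> Ff g 0 = g - g^2"
  by (simp add: Ff_def ov_def max_def)

lemma lemmaB:
  fixes v s :: "nat \<Rightarrow> real"
  assumes inj: "inj_on v {..<n}" and g: "0 \<le> g" "g \<le> 1" and dpos: "\<delta> > 0"
    and H: "\<And>t. (\<Sum>i<n. \<Sum>j<n. Ff g ((s i + v i * t) - (s j + v j * t))) \<le> real n * (g - g^2) - \<delta>"
  shows False
proof -
  define x where "x i t = s i + v i * t" for i t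
  define C where "C t = (\<Sum>i<n. \<Sum>j\<in>{..<n}-{i}. Ff g (x i t - x j t))" for t
  define Hf where "Hf t = (\<Sum>i<n. \<Sum>j\<in>{..<n}-{i}. Gf g (x i t - x j t) / (v i - v j))" for t
  define L where "L = (\<Sum>i<n. \<Sum>j\<in>{..<n}-{i}. 3 / \<bar>v i - v j\<bar>)"
  have vne: "v i - v j \<noteq> 0" if "i < n" "j \<in> {..<n}-{i}" for i j
    using inj that by (auto dest: inj_onD)
  have Cle: "C t \<le> - \<delta>" for t
  proof -
    have "(\<Sum>i<n. \<Sum>j<n. Ff g (x i t - x j t)) = (\<Sum>i<n. Ff g 0 + (\<Sum>j\<in>{..<n}-{i}. Ff g (x i t - x j t)))"
      by (intro sum.cong refl) (simp add: sum.remove)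
    also have "\<dots> = real n * (g - g^2) + C t" by (simp add: sum.distrib C_def Ff_0[OF g])
    finally show ?thesis using H[of t] unfolding x_def by simp
  qed
  have D: "(Hf has_field_derivative C t) (at t)" for t
  proof -
    have "(Hf has_field_derivative (\<Sum>i<n. \<Sum>j\<in>{..<n}-{i}. Ff g (x i t - x j t) * (v i - v j) / (v i - v j))) (at t)"
    proof -
      have d1: "((\<lambda>t. Gf g (x i t - x j t) / (v i - v j)) has_field_derivative
           Ff g (x i t - x j t) * (v i - v j) / (v i - v j)) (at t)" for i j
      proof -
        have "((\<lambda>t. x i t - x j t) has_field_derivative (v i - v j)) (at t)"
          unfolding x_def by (auto intro!: derivative_eq_intros simp: algebra_simps)
        from DERIV_chain2[OF Gf_deriv[OF g] this] show ?thesis by (rule DERIV_cdivide)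
      qed
      show ?thesis unfolding Hf_def[abs_def] by (intro DERIV_sum d1)
    qed
    also have "(\<Sum>i<n. \<Sum>j\<in>{..<n}-{i}. Ff g (x i t - x j t) * (v i - v j) / (v i - v j)) = C t"
      unfolding C_def using vne by (intro sum.cong refl) auto
    finally show ?thesis .
  qed
  have Hb: "\<bar>Hf t\<bar> \<le> L" for t
  proof -
    have "\<bar>Hf t\<bar> \<le> (\<Sum>i<n. \<bar>\<Sum>j\<in>{..<n}-{i}. Gf g (x i t - x j t) / (v i - v j)\<bar>)"
      unfolding Hf_def by (rule sum_abs)
    also have "\<dots> \<le> (\<Sum>i<n. \<Sum>j\<in>{..<n}-{i}. \<bar>Gf g (x i t - x j t) / (v i - v j)\<bar>)"
      by (intro sum_mono sum_abs)
    also have "\<dots> \<le> L" unfolding L_def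
    proof (intro sum_mono)
      fix i j assume ij: "i \<in> {..<n}" "j \<in> {..<n}-{i}"
      have "\<bar>Gf g (x i t - x j t)\<bar> / \<bar>v i - v j\<bar> \<le> 3 / \<bar>v i - v j\<bar>"
        using Gf_bound[OF g] vne[of i j] ij by (intro divide_right_mono) auto
      then show "\<bar>Gf g (x i t - x j t) / (v i - v j)\<bar> \<le> 3 / \<bar>v i - v j\<bar>" by (simp add: abs_divide)
    qed
    finally show ?thesis .
  qed
  define T where "T = (2 * L + 1) / \<delta>"
  have L0: "0 \<le> L" using Hb[of 0] by simp
  have T0: "0 < T" unfolding T_def using L0 dpos by simp
  obtain z where "0 < z" "z < T" and eq: "Hf T - Hf 0 = (T - 0) * C z"
    using MVT2[OF T0, of Hf C] D by blast
  have "T * C z \<le> T * (-\<delta>)" using Cle[of z] T0 by (intro mult_left_mono) auto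
  also have "T * (-\<delta>) = -(2 * L + 1)" unfolding T_def using dpos by simp
  finally have "Hf T - Hf 0 \<le> -(2*L+1)" using eq by simp
  moreover have "\<bar>Hf T\<bar> \<le> L" "\<bar>Hf 0\<bar> \<le> L" using Hb by auto
  ultimately show False by linarith
qed


lemma has_integral_shift:
  fixes f :: "real \<Rightarrow> real"
  assumes "(f has_integral I) {a..b}"
  shows "((\<lambda>x. f (x + c)) has_integral I) {a - c..b - c}"
proof -
  have "((\<lambda>x. f (1 *\<^sub>R x + c)) has_integral (1 / (\<bar>1::real\<bar> ^ DIM(real))) *\<^sub>R I)
     ((\<lambda>x. (1 / 1) *\<^sub>R x + -((1 / 1) *\<^sub>R c)) ` cbox a b)"
    using has_integral_affinity[of f I a b "1::real" c] assms by simp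
  moreover have "(\<lambda>x. (1 / 1) *\<^sub>R x + -((1 / 1) *\<^sub>R c)) ` cbox a b = {a - c..b - c}"
  proof -
    have "(\<lambda>x. x + - c) ` {a..b} = {a - c..b - c}"
    proof
      show "(\<lambda>x. x + - c) ` {a..b} \<subseteq> {a - c..b - c}" by auto
      show "{a - c..b - c} \<subseteq> (\<lambda>x. x + - c) ` {a..b}"
      proof
        fix y assume "y \<in> {a - c..b - c}"
        then show "y \<in> (\<lambda>x. x + - c) ` {a..b}" by (intro image_eqI[of _ _ "y + c"]) auto
      qed
    qed
    then show ?thesis by simp
  qed
  ultimately show ?thesis by simp
qed

lemma periodic_int:
  fixes f :: "real \<Rightarrow> real"
  assumes per: "\<And>x. f (x + 1) = f x"
  shows "f (x + real_of_int k) = f x"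
proof -
  have nat: "f (y + real m) = f y" for y m
  proof (induction m)
    case 0 then show ?case by simp
  next
    case (Suc m)
    have "f (y + real (Suc m)) = f ((y + real m) + 1)" by (simp add: algebra_simps)
    also have "\<dots> = f (y + real m)" by (rule per)
    finally show ?case using Suc.IH by simp
  qed
  show ?thesis
  proof (cases "k \<ge> 0")
    case True
    then show ?thesis using nat[of x "nat k"] by simp
  next
    case False
    have "f (x + real_of_int k) = f (x + real_of_int k + real (nat (-k)))" using nat by simp
    also have "\<dots> = f x" using False by simp
    finally show ?thesis .
  qed
qed

lemma periodic_integral:
  fixes f :: "real \<Rightarrow> real"
  assumes per: "\<And>x. f (x + 1) = f x" and fi: "(f has_integral I) {0..1}"
  shows "(f has_integral I) {c..c+1}"
proof -
  define r where "r = frac c"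
  define k where "k = real_of_int (floor c)"
  have r: "0 \<le> r" "r < 1" unfolding r_def by (auto simp: frac_lt_1)
  have ck: "c = k + r" unfolding r_def k_def frac_def by simp
  have int: "f integrable_on {0..1}" using fi by blast
  have A: "(f has_integral integral {0..r} f) {0..r}"
    using integrable_subinterval_real[OF int, of 0 r] r by auto
  have B: "(f has_integral integral {r..1} f) {r..1}"
    using integrable_subinterval_real[OF int, of r 1] r by auto
  have AB: "integral {0..r} f + integral {r..1} f = I"
    using has_integral_unique[OF has_integral_combine[OF _ _ A B] fi] r by auto
  have A1: "(f has_integral integral {0..r} f) {1..r+1}"
  proof -
    have "((\<lambda>x. f (x + (-1))) has_integral integral {0..r} f) {0 - (-1)..r - (-1)}"
      by (rule has_integral_shift[OF A])
    moreover have "(\<lambda>x. f (x + (-1))) = f"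
    proof
      fix x show "f (x + (-1)) = f x" using per[of "x + -1"] by simp
    qed
    ultimately show ?thesis by (simp add: add.commute)
  qed
  have "(f has_integral (integral {r..1} f + integral {0..r} f)) {r..r+1}"
    by (rule has_integral_combine[OF _ _ B A1]) (use r in auto)
  then have R: "(f has_integral I) {r..r+1}" using AB by (simp add: add.commute)
  have "((\<lambda>x. f (x + (-k))) has_integral I) {r - (-k)..r + 1 - (-k)}"
    by (rule has_integral_shift[OF R])
  moreover have "(\<lambda>x. f (x + (-k))) = f"
  proof
    fix x show "f (x + (-k)) = f x" unfolding k_def using periodic_int[of f x "- floor c", OF per] by simp
  qed
  ultimately show ?thesis using ck by (simp add: algebra_simps)
qed

definition chi :: "real \<Rightarrow> real \<Rightarrow> real" where "chi g u = (if frac u \<le> g then 1 else 0)"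

lemma ind_integral:
  assumes "0 \<le> p" "q \<le> 1"
  shows "((\<lambda>u. if u \<in> {p..q} then 1 else 0::real) has_integral max 0 (q - p)) {0..1}"
proof (cases "p \<le> q")
  case True
  have "((\<lambda>u. if u \<in> cbox p q then 1 else 0::real) has_integral (q - p)) (cbox 0 1)"
    using has_integral_restrict_closed_subinterval[OF has_integral_const[of "1::real" p q]] True assms
    by (simp add: cbox_interval)
  then show ?thesis using True by (simp add: cbox_interval)
next
  case False
  then show ?thesis by simp
qed

lemma K0:
  assumes g: "0 \<le> g" "g < 1"
  shows "((\<lambda>u. chi g (u + d) * chi g u) has_integral ov g (frac d)) {0..1}"
proof -
  define e where "e = frac d"
  have e: "0 \<le> e" "e < 1" unfolding e_def by (auto simp: frac_lt_1)
  have I: "((\<lambda>u. (if u \<in> {0..g - e} then 1 else 0) + (if u \<in> {1 - e..g} then 1 else 0)::real)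
     has_integral (max 0 (g - e - 0) + max 0 (g - (1 - e)))) {0..1}"
    by (intro has_integral_add ind_integral) (use g e in auto)
  have pt: "chi g (u + d) * chi g u = (if u \<in> {0..g - e} then 1 else 0) + (if u \<in> {1 - e..g} then 1 else 0)"
    if u: "u \<in> {0..1} - {1}" for u
  proof -
    have u01: "0 \<le> u" "u < 1" using u by auto
    have fu: "frac u = u" using u01 by (simp add: frac_eq)
    have fud: "frac (u + d) = frac (u + e)" unfolding e_def by simp
    show ?thesis
    proof (cases "u + e < 1")
      case True
      then have "frac (u + e) = u + e" using u01 e by (simp add: frac_eq)
      then show ?thesis using True u01 e unfolding chi_def fud fu by auto
    next
      case False
      then have "frac (u + e) = u + e - 1" using u01 e frac_unique_iff[of "u+e" "u + e - 1"] by auto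
      then show ?thesis using False u01 e g unfolding chi_def fud fu by auto
    qed
  qed
  have "((\<lambda>u. chi g (u + d) * chi g u) has_integral (max 0 (g - e - 0) + max 0 (g - (1 - e)))) {0..1}"
    by (rule has_integral_spike[OF _ _ I, of "{1}"]) (use pt in auto)
  then show ?thesis unfolding ov_def e_def by (simp add: algebra_simps)
qed

lemma chi_per: "chi g (u + 1) = chi g u"
  unfolding chi_def by (simp add: frac_1_eq)

lemma K:
  assumes g: "0 \<le> g" "g < 1"
  shows "((\<lambda>\<alpha>. chi g (a - \<alpha>) * chi g (b - \<alpha>)) has_integral ov g (frac (a - b))) {0..1}"
proof -
  define q where "q u = chi g (u + (a - b)) * chi g u" for u
  have per: "q (x + 1) = q x" for x
  proof -
    have e: "x + 1 + (a - b) = (x + (a - b)) + 1" by simp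
    show ?thesis unfolding q_def e chi_per ..
  qed
  have "(q has_integral ov g (frac (a - b))) {b - 1..b - 1 + 1}"
    by (rule periodic_integral[of q, OF per]) (unfold q_def, rule K0[OF g])
  then have "(q has_integral ov g (frac (a - b))) {b - 1..b}" by simp
  then have "((\<lambda>x. q (-x)) has_integral ov g (frac (a - b))) {-b..-(b-1)}"
    by (rule has_integral_reflect_real[THEN iffD2])
  then have "((\<lambda>x. q (- (x + - b))) has_integral ov g (frac (a - b))) {-b - -b..-(b-1) - -b}"
    by (rule has_integral_shift[where f="\<lambda>x. q (-x)"])
  moreover have "(\<lambda>x. q (- (x + - b))) = (\<lambda>\<alpha>. chi g (a - \<alpha>) * chi g (b - \<alpha>))"
  proof
    fix x
    have e1: "b - x + (a - b) = a - x" and e2: "- (x + - b) = b - x" by simp_all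
    show "q (- (x + - b)) = chi g (a - x) * chi g (b - x)" unfolding q_def e2 e1 ..
  qed
  moreover have "{-b - -b..-(b-1) - -b} = {0..1::real}" by simp
  ultimately show ?thesis by simp
qed


lemma lemmaA:
  fixes y :: "nat \<Rightarrow> real"
  assumes g: "0 \<le> g" "g < 1"
    and le: "\<And>\<alpha>. \<alpha> \<in> {0..1} \<Longrightarrow> ((\<Sum>i<n. chi g (y i - \<alpha>)) - g * real n)^2 \<le> m"
  shows "(\<Sum>i<n. \<Sum>j<n. Ff g (y i - y j)) \<le> m"
proof -
  define c where "c = g * real n"
  have I1: "((\<lambda>\<alpha>. \<Sum>i<n. \<Sum>j<n. chi g (y i - \<alpha>) * chi g (y j - \<alpha>)) has_integral
      (\<Sum>i<n. \<Sum>j<n. ov g (frac (y i - y j)))) {0..1}"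
    by (intro has_integral_sum K[OF g]) auto
  have chi2: "chi g u * chi g u = chi g u" for u by (simp add: chi_def)
  have I2: "((\<lambda>\<alpha>. \<Sum>i<n. chi g (y i - \<alpha>)) has_integral (\<Sum>i<n. g)) {0..1}"
  proof (intro has_integral_sum)
    fix i
    have "((\<lambda>\<alpha>. chi g (y i - \<alpha>) * chi g (y i - \<alpha>)) has_integral ov g (frac (y i - y i))) {0..1}"
      by (rule K[OF g])
    then show "((\<lambda>\<alpha>. chi g (y i - \<alpha>)) has_integral g) {0..1}"
      using g by (simp add: chi2 ov_def max_def)
  qed auto
  have I3: "((\<lambda>\<alpha>. (\<Sum>i<n. \<Sum>j<n. chi g (y i - \<alpha>) * chi g (y j - \<alpha>)) - 2 * c * (\<Sum>i<n. chi g (y i - \<alpha>)) + c^2)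
      has_integral ((\<Sum>i<n. \<Sum>j<n. ov g (frac (y i - y j))) - 2 * c * (\<Sum>i<n. g) + Henstock_Kurzweil_Integration.content {0..1::real} *\<^sub>R c^2)) {0..1}"
    by (rule has_integral_add[OF has_integral_diff[OF I1 has_integral_mult_right[OF I2, of "2 * c"]] has_integral_const_real[of "c^2" 0 1]])
  have eqf: "(\<Sum>i<n. \<Sum>j<n. chi g (y i - \<alpha>) * chi g (y j - \<alpha>)) - 2 * c * (\<Sum>i<n. chi g (y i - \<alpha>)) + c^2
      = ((\<Sum>i<n. chi g (y i - \<alpha>)) - g * real n)^2" for \<alpha>
  proof -
    have pr: "(\<Sum>i<n. \<Sum>j<n. chi g (y i - \<alpha>) * chi g (y j - \<alpha>)) = (\<Sum>i<n. chi g (y i - \<alpha>)) * (\<Sum>i<n. chi g (y i - \<alpha>))"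
      by (rule sum_product[symmetric])
    have ar: "S * S - 2 * c * S + c^2 = (S - g * real n)^2" for S :: real
      unfolding c_def by (simp add: power2_eq_square algebra_simps)
    show ?thesis unfolding pr by (rule ar)
  qed
  have eqv: "(\<Sum>i<n. \<Sum>j<n. ov g (frac (y i - y j))) - 2 * c * (\<Sum>i<n. g) + Henstock_Kurzweil_Integration.content {0..1::real} *\<^sub>R c^2
      = (\<Sum>i<n. \<Sum>j<n. Ff g (y i - y j))"
  proof -
    have s1: "(\<Sum>i<n. \<Sum>j<n. Ff g (y i - y j)) = (\<Sum>i<n. \<Sum>j<n. ov g (frac (y i - y j))) - real n * real n * g^2"
      unfolding Ff_def by (simp add: sum_subtractf sum_distrib_left)
    have ar: "S - 2 * c * (real n * g) + 1 * c^2 = S - real n * real n * g^2" for S :: real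
      unfolding c_def by (simp add: power2_eq_square algebra_simps)
    show ?thesis unfolding s1 using ar by simp
  qed
  have I4: "((\<lambda>\<alpha>. ((\<Sum>i<n. chi g (y i - \<alpha>)) - g * real n)^2) has_integral (\<Sum>i<n. \<Sum>j<n. Ff g (y i - y j))) {0..1}"
    using I3 unfolding eqf eqv .
  have "(\<Sum>i<n. \<Sum>j<n. Ff g (y i - y j)) \<le> Henstock_Kurzweil_Integration.content {0..1::real} *\<^sub>R m"
    by (rule has_integral_le[OF I4 has_integral_const_real]) (rule le, simp)
  then show ?thesis by simp
qed


lemma frac_frac_diff: "frac (frac a - b) = frac (a - b)"
  using frac_add_simps(1)[of a "-b"] by simp

lemma N_eq: "real (N_S (sector \<alpha> g) n x) = (\<Sum>i<n. chi g (x i - \<alpha>))"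
proof -
  have "{i \<in> {..<n}. frac (x i) \<in> sector \<alpha> g} = {i \<in> {..<n}. frac (x i - \<alpha>) \<le> g}"
  proof -
    have "frac z \<le> 1" for z using frac_lt_1[of z] by simp
    then show ?thesis unfolding sector_def by (auto simp: frac_frac_diff)
  qed
  then have "real (N_S (sector \<alpha> g) n x) = real (card {i \<in> {..<n}. frac (x i - \<alpha>) \<le> g})"
    unfolding N_S_def by simp
  also have "\<dots> = (\<Sum>i\<in>{i \<in> {..<n}. frac (x i - \<alpha>) \<le> g}. 1)" by simp
  also have "\<dots> = (\<Sum>i<n. chi g (x i - \<alpha>))"
    by (subst sum.inter_filter) (auto simp: chi_def)
  finally show ?thesis .
qed

lemma N_le: "N_S S n x \<le> n"
  unfolding N_S_def by (rule order.trans[OF card_mono[of "{..<n}"]]) auto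

lemma main1:
  fixes n :: nat and v s :: "nat \<Rightarrow> real" and g :: real
  assumes inj: "inj_on v {..<n}" and g: "0 \<le> g" "g \<le> 1"
  shows "\<exists>t::real. \<exists>\<alpha>::real. 0 \<le> \<alpha> \<and> \<alpha> \<le> 1 \<and>
            \<bar>real (N_S (sector \<alpha> g) n (\<lambda>i. s i + v i * t)) - g * real n\<bar>
              \<ge> sqrt ((g - g\<^sup>2) * real n)"
proof (cases "g = 1")
  case True
  then show ?thesis by (intro exI[of _ 0]) auto
next
  case False
  then have g1: "g < 1" using g by simp
  define \<tau> where "\<tau> = sqrt ((g - g\<^sup>2) * real n)"
  have gg: "0 \<le> g - g\<^sup>2" using g mult_left_mono[of g 1 g] by (simp add: power2_eq_square)
  have tau2: "\<tau>^2 = (g - g\<^sup>2) * real n" unfolding \<tau>_def using mult_nonneg_nonneg[OF gg, of "real n"] by simp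
  have tau0: "0 \<le> \<tau>" unfolding \<tau>_def using mult_nonneg_nonneg[OF gg, of "real n"] by simp
  show ?thesis
  proof (rule ccontr)
    assume "\<not> ?thesis"
    then have lt: "\<bar>real (N_S (sector \<alpha> g) n (\<lambda>i. s i + v i * t)) - g * real n\<bar> < \<tau>"
      if "0 \<le> \<alpha>" "\<alpha> \<le> 1" for t \<alpha> using that unfolding \<tau>_def by (meson not_le)
    define W where "W = {k \<in> {0..n}. \<bar>real k - g * real n\<bar> < \<tau>}"
    define m where "m = Max ((\<lambda>k. (real k - g * real n)^2) ` W)"
    have inW: "N_S (sector \<alpha> g) n (\<lambda>i. s i + v i * t) \<in> W" if "0 \<le> \<alpha>" "\<alpha> \<le> 1" for t \<alpha>
      unfolding W_def using lt[OF that, of t] N_le by auto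
    have finW: "finite W" unfolding W_def by simp
    have neW: "W \<noteq> {}" using inW[of 0 0] by auto
    have mle: "(real k - g * real n)^2 \<le> m" if "k \<in> W" for k
      unfolding m_def using finW that by (intro Max_ge) auto
    have "m \<in> (\<lambda>k. (real k - g * real n)^2) ` W" unfolding m_def using finW neW by (intro Max_in) auto
    then obtain k where k: "k \<in> W" "m = (real k - g * real n)^2" by auto
    have "m < \<tau>^2"
    proof -
      have "\<bar>real k - g * real n\<bar> < \<tau>" using k unfolding W_def by auto
      then have "\<bar>real k - g * real n\<bar>^2 < \<tau>^2"
        by (intro power_strict_mono) auto
      then show ?thesis using k by simp
    qed
    define \<delta> where "\<delta> = real n * (g - g^2) - m"
    have dpos: "\<delta> > 0" using \<open>m < \<tau>^2\<close> tau2 unfolding \<delta>_def by (simp add: algebra_simps)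
    have H: "(\<Sum>i<n. \<Sum>j<n. Ff g ((s i + v i * t) - (s j + v j * t))) \<le> real n * (g - g^2) - \<delta>" for t
    proof -
      have "(\<Sum>i<n. \<Sum>j<n. Ff g ((\<lambda>i. s i + v i * t) i - (\<lambda>i. s i + v i * t) j)) \<le> m"
      proof (rule lemmaA[OF g(1) g1])
        fix \<alpha> :: real assume a: "\<alpha> \<in> {0..1}"
        have "(real (N_S (sector \<alpha> g) n (\<lambda>i. s i + v i * t)) - g * real n)^2 \<le> m"
          using mle[OF inW] a by auto
        then show "((\<Sum>i<n. chi g ((\<lambda>i. s i + v i * t) i - \<alpha>)) - g * real n)^2 \<le> m"
          unfolding N_eq by simp
      qed
      then show ?thesis unfolding \<delta>_def by simp
    qed
    show False by (rule lemmaB[OF inj g dpos H])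
  qed
qed


lemma sec_mem: "frac z \<in> sector \<alpha> g \<longleftrightarrow> frac (z - \<alpha>) \<le> g"
proof -
  have "frac z \<le> 1" using frac_lt_1[of z] by simp
  then show ?thesis unfolding sector_def by (auto simp: frac_frac_diff)
qed

lemma bias_upper:
  assumes "0 \<le> a" "a \<le> b" "b \<le> 1"
  shows "\<bar>real (card {i \<in> {..<n}. frac (x i) \<in> {a..b}}) - real n * (b - a)\<bar> \<le> bias n x"
proof -
  define F where "F = (\<lambda>ab::real\<times>real. \<bar>real (card {i \<in> {..<n}. frac (x i) \<in> {fst ab..snd ab}}) - real n * (snd ab - fst ab)\<bar>)"
  define B where "B = {(a, b). 0 \<le> a \<and> a \<le> b \<and> b \<le> (1::real)}"
  have bdd: "bdd_above (F ` B)"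
  proof (rule bdd_aboveI2)
    fix ab assume ab: "ab \<in> B"
    have c: "card {i \<in> {..<n}. frac (x i) \<in> {fst ab..snd ab}} \<le> n"
      by (rule order.trans[OF card_mono[of "{..<n}"]]) auto
    obtain a b where abd: "ab = (a, b)" "0 \<le> a" "a \<le> b" "b \<le> 1" using ab unfolding B_def by auto
    have "real n * (b - a) \<le> real n * 1" by (rule mult_left_mono) (use abd in auto)
    moreover have "0 \<le> real n * (b - a)" using abd by simp
    ultimately have "real n * (snd ab - fst ab) \<le> real n * 1" "0 \<le> real n * (snd ab - fst ab)"
      using abd by auto
    then show "F ab \<le> 2 * real n" unfolding F_def using c by (simp add: abs_le_iff) 
  qed
  have "F (a, b) \<le> Sup (F ` B)" by (rule cSUP_upper[OF _ bdd]) (use assms in \<open>auto simp: B_def\<close>)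
  then show ?thesis unfolding F_def B_def bias_def by simp
qed

lemma bias_ge:
  assumes a: "0 \<le> \<alpha>" "\<alpha> \<le> 1"
  shows "\<bar>real (N_S (sector \<alpha> (1/2)) n x) - 1/2 * real n\<bar> \<le> bias n x"
proof -
  define N where "N = N_S (sector \<alpha> (1/2)) n x"
  have Ndef: "N = card {i \<in> {..<n}. frac (x i - \<alpha>) \<le> 1/2}"
    unfolding N_def N_S_def sec_mem ..
  have p: "0 \<le> frac (x i)" "frac (x i) < 1" for i by (auto simp: frac_lt_1)
  have fd: "frac (x i - \<alpha>) = frac (frac (x i) - \<alpha>)" for i by (simp add: frac_frac_diff)
  show ?thesis
  proof (cases "\<alpha> < 1/2")
    case True
    have "{i \<in> {..<n}. frac (x i - \<alpha>) \<le> 1/2} = {i \<in> {..<n}. frac (x i) \<in> {\<alpha>..\<alpha>+1/2}}"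
    proof (intro Collect_cong conj_cong refl)
      fix i
      define q where "q = frac (x i)"
      have q: "0 \<le> q" "q < 1" using p unfolding q_def by auto
      show "(frac (x i - \<alpha>) \<le> 1/2) = (frac (x i) \<in> {\<alpha>..\<alpha>+1/2})"
        unfolding fd q_def[symmetric]
      proof (cases "\<alpha> \<le> q")
        case True
        then have "frac (q - \<alpha>) = q - \<alpha>" using q a by (simp add: frac_eq)
        then show "(frac (q - \<alpha>) \<le> 1/2) = (q \<in> {\<alpha>..\<alpha>+1/2})" using True by auto
      next
        case False
        then have "frac (q - \<alpha>) = q - \<alpha> + 1" using q a frac_unique_iff[of "q - \<alpha>" "q - \<alpha> + 1"] by auto
        then show "(frac (q - \<alpha>) \<le> 1/2) = (q \<in> {\<alpha>..\<alpha>+1/2})" using False q \<open>\<alpha> < 1/2\<close> by auto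
      qed
    qed
    then have "N = card {i \<in> {..<n}. frac (x i) \<in> {\<alpha>..\<alpha>+1/2}}" using Ndef by simp
    moreover have "\<bar>real (card {i \<in> {..<n}. frac (x i) \<in> {\<alpha>..\<alpha>+1/2}}) - real n * (\<alpha> + 1/2 - \<alpha>)\<bar> \<le> bias n x"
      by (rule bias_upper) (use a True in auto)
    ultimately show ?thesis unfolding N_def[symmetric] by (simp add: mult.commute)
  next
    case False
    define Os where "Os = {i \<in> {..<n}. \<alpha> - 1/2 < frac (x i) \<and> frac (x i) < \<alpha>}"
    have "{i \<in> {..<n}. frac (x i - \<alpha>) \<le> 1/2} = {..<n} - Os"
    proof -
      have "frac (x i - \<alpha>) \<le> 1/2 \<longleftrightarrow> \<not> (\<alpha> - 1/2 < frac (x i) \<and> frac (x i) < \<alpha>)" for i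
      proof -
        define q where "q = frac (x i)"
        have q: "0 \<le> q" "q < 1" using p unfolding q_def by auto
        show ?thesis unfolding fd q_def[symmetric]
        proof (cases "\<alpha> \<le> q")
          case True
          then have "frac (q - \<alpha>) = q - \<alpha>" using q a by (simp add: frac_eq)
          then show "(frac (q - \<alpha>) \<le> 1/2) = (\<not> (\<alpha> - 1/2 < q \<and> q < \<alpha>))" using True q \<open>\<not> \<alpha> < 1/2\<close> by auto
        next
          case F: False
          then have "frac (q - \<alpha>) = q - \<alpha> + 1" using q a frac_unique_iff[of "q - \<alpha>" "q - \<alpha> + 1"] by auto
          then show "(frac (q - \<alpha>) \<le> 1/2) = (\<not> (\<alpha> - 1/2 < q \<and> q < \<alpha>))" using F q by auto
        qed
      qed
      then show ?thesis unfolding Os_def by auto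
    qed
    moreover have "card ({..<n} - Os) = card {..<n} - card Os"
      by (rule card_Diff_subset) (auto simp: Os_def)
    ultimately have NO: "N = n - card Os" using Ndef by simp
    have Ole: "card Os \<le> n" unfolding Os_def by (rule order.trans[OF card_mono[of "{..<n}"]]) auto
    then have NOr: "real N = real n - real (card Os)" using NO by simp
    show ?thesis
    proof (cases "real N \<le> real n / 2")
      case True
      have sub: "card Os \<le> card {i \<in> {..<n}. frac (x i) \<in> {\<alpha> - 1/2..\<alpha>}}"
        unfolding Os_def by (rule card_mono) auto
      have "\<bar>real (card {i \<in> {..<n}. frac (x i) \<in> {\<alpha> - 1/2..\<alpha>}}) - real n * (\<alpha> - (\<alpha> - 1/2))\<bar> \<le> bias n x"
        by (rule bias_upper) (use a False in auto)
      then show ?thesis unfolding N_def[symmetric] using sub NOr True by (simp add: abs_le_iff)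
    next
      case True2: False
      show ?thesis unfolding N_def[symmetric]
      proof (rule field_le_epsilon)
        fix e :: real assume e: "0 < e"
        define \<epsilon> where "\<epsilon> = min (1/8) (e / (2 * real n + 1))"
        have ep: "0 < \<epsilon>" "\<epsilon> \<le> 1/8"
          using e unfolding \<epsilon>_def by (simp, simp add: min_def)
        have ep2: "2 * real n * \<epsilon> \<le> e"
        proof -
          have "\<epsilon> \<le> e / (2 * real n + 1)" unfolding \<epsilon>_def by simp
          then have "\<epsilon> * (2 * real n + 1) \<le> e" by (simp add: field_simps)
          then show ?thesis using ep by (simp add: algebra_simps)
        qed
        have sub: "card {i \<in> {..<n}. frac (x i) \<in> {\<alpha> - 1/2 + \<epsilon>..\<alpha> - \<epsilon>}} \<le> card Os"
          unfolding Os_def using ep by (intro card_mono) auto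
        have "\<bar>real (card {i \<in> {..<n}. frac (x i) \<in> {\<alpha> - 1/2 + \<epsilon>..\<alpha> - \<epsilon>}}) - real n * (\<alpha> - \<epsilon> - (\<alpha> - 1/2 + \<epsilon>))\<bar> \<le> bias n x"
          by (rule bias_upper) (use a False ep in auto)
        then have "real n * (1/2 - 2 * \<epsilon>) - real (card Os) \<le> bias n x"
          using sub by (simp add: abs_le_iff algebra_simps)
        then show "\<bar>real N - 1/2 * real n\<bar> \<le> bias n x + e"
          using NOr True2 ep2 by (simp add: abs_le_iff algebra_simps)
      qed
    qed
  qed
qed


theorem theorem3p2:
  fixes n :: nat and v s :: "nat \<Rightarrow> real" and \<gamma> :: real
  assumes "inj_on v {..<n}"
    and "\<forall>i<n. 0 \<le> s i \<and> s i < 1"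
    and "0 \<le> \<gamma>" and "\<gamma> \<le> 1"
  shows "(\<exists>t::real. \<exists>\<alpha>::real. 0 \<le> \<alpha> \<and> \<alpha> \<le> 1 \<and>
            \<bar>real (N_S (sector \<alpha> \<gamma>) n (\<lambda>i. s i + v i * t)) - \<gamma> * real n\<bar>
              \<ge> sqrt ((\<gamma> - \<gamma>\<^sup>2) * real n))
       \<and> (\<exists>t::real. bias n (\<lambda>i. s i + v i * t) \<ge> sqrt (real n) / 2)"
proof
  show "\<exists>t::real. \<exists>\<alpha>::real. 0 \<le> \<alpha> \<and> \<alpha> \<le> 1 \<and>
            \<bar>real (N_S (sector \<alpha> \<gamma>) n (\<lambda>i. s i + v i * t)) - \<gamma> * real n\<bar>
              \<ge> sqrt ((\<gamma> - \<gamma>\<^sup>2) * real n)"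
    by (rule main1[OF assms(1,3,4)])
  obtain t \<alpha> where ta: "0 \<le> \<alpha>" "\<alpha> \<le> 1"
    "\<bar>real (N_S (sector \<alpha> (1/2)) n (\<lambda>i. s i + v i * t)) - 1/2 * real n\<bar>
              \<ge> sqrt ((1/2 - (1/2)\<^sup>2) * real n)"
    using main1[OF assms(1), of "1/2" s] by auto
  have "sqrt ((1/2 - (1/2::real)\<^sup>2) * real n) = sqrt (real n) / 2"
  proof -
    have "(1/2 - (1/2::real)\<^sup>2) * real n = real n / 4" by (simp add: power2_eq_square)
    moreover have s4: "sqrt (4::real) = 2" using real_sqrt_abs[of "2::real"] by simp
    ultimately show ?thesis by (simp only: real_sqrt_divide)
  qed
  then have "sqrt (real n) / 2 \<le> bias n (\<lambda>i. s i + v i * t)"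
    using ta bias_ge[OF ta(1,2), of n "\<lambda>i. s i + v i * t"] by simp
  then show "\<exists>t::real. bias n (\<lambda>i. s i + v i * t) \<ge> sqrt (real n) / 2" by blast
qed

end
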